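(* Let $\alpha>0$ and let $b:\mathbb{R}^+\times\mathbb{R}^2\to\mathbb{R}$ satisfy $b\in W^{1,\infty}$ and $b>\alpha$. Consider the formal Hilbert expansion $f^\varepsilon=\sum_k\varepsilon^kf_k$, $\mathbf{E}^\varepsilon=\sum_k\varepsilon^k\mathbf{E}_k$ of solutions of $$\varepsilon\,\partial_t f^\varepsilon+\mathbf{v}\cdot\nabla_{\mathbf{x}}f^\varepsilon+\Big(\mathbf{E}^\varepsilon+\frac{b}{\varepsilon}\mathbf{v}^\perp\Big)\cdot\nabla_{\mathbf{v}}f^\varepsilon=0,\quad -\Delta\phi^\varepsilon=\int_{\mathbb{R}^3}f^\varepsilon\,d\mathbf{v},\quad\mathbf{E}^\varepsilon=-\nabla_{\mathbf{x}}\phi^\varepsilon,\quad f^\varepsilon(0)=\sum_k\varepsilon^kf_{{\rm in},k},$$ so that $\mathbf{E}_k=-\nabla\phi_k$ with $-\Delta\phi_k=\int f_k\,d\mathbf{v}$ and $f_k(0)=f_{{\rm in},k}$. Let the leading order be $f_0(t,\mathbf{x},\mathbf{v})=F(t,\mathbf{x},w,v_\parallel)$, $\mathbf{E}_0=\mathbf{E}_F=-\nabla\phi_F$ with $-\Delta\phi_F=2\pi\int_{\mathbb{R}^+\times\mathbb{R}}F\,w\,dw\,dv_\parallel$. Then the equation $$\mathcal{L}f_1=\mathbf{v}\cdot\nabla_{\mathbf{x}}f_0+\mathbf{E}_0\cdot\nabla_{\mathbf{v}}f_0,\qquad \mathcal{L}f:=-b(t,\mathbf{x}_\perp)\,\mathbf{v}^\perp\cdot\nabla_{\mathbf{v}}f,$$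 admits a solution $f_1$ if and only if $F$ satisfies $$v_\parallel\,\partial_{x_\parallel}F-\partial_{x_\parallel}\phi_F\,\partial_{v_\parallel}F=0.$$ Moreover, if this condition is satisfied, then there exists a function $P=P(t,\mathbf{x},w,v_\parallel)$ in the kernel of $\mathcal{L}$ such that $$f_1(t,\mathbf{x},\mathbf{v})=-\frac{1}{b(t,\mathbf{x}_\perp)}\,\mathbf{e}_\theta\cdot\mathbf{G}(t,\mathbf{x},w,v_\parallel)+P(t,\mathbf{x},w,v_\parallel),\qquad \mathbf{E}_1(t,\mathbf{x})=\mathbf{E}_P:=-\nabla\phi_P,$$ where $\mathbf{G}=w\,\nabla_{\mathbf{x}_\perp}F-\nabla_{\mathbf{x}_\perp}\phi_F\,\partial_wF$, $\phi_P$ solves $-\Delta\phi_P=2\pi\int_{\mathbb{R}^+\times\mathbb{R}}P\,w\,dw\,dv_\parallel$, and at time $t=0$, $P(0)=\Pi f_1(0,\mathbf{x},\mathbf{v})$.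
   Context: Notation: $\mathbf{x}=(\mathbf{x}_\perp,x_\parallel)$, $\mathbf{x}_\perp=(x,y)$, $x_\parallel=z$; $\mathbf{v}=(\mathbf{v}_\perp,v_\parallel)$, $\mathbf{v}_\perp=(v_x,v_y)$, $v_\parallel=v_z$; $\mathbf{v}^\perp=(v_y,-v_x,v_z)$. Polar coordinates $v_x=w\cos\theta$, $v_y=w\sin\theta$, $\mathbf{e}_w=(\cos\theta,\sin\theta)$, $\mathbf{e}_\theta=(-\sin\theta,\cos\theta)$. Gyroaverage: $\Pi f(w,v_\parallel)=\frac1{2\pi}\int_0^{2\pi}f\,d\theta$. All functions are assumed smooth (formal setting). *)

theory Defs
  imports "HOL-Analysis.Analysis"
begin

definition pdir :: "'a::real_normed_vector \<Rightarrow> ('a \<Rightarrow> real) \<Rightarrow> 'a \<Rightarrow> real" where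
  "pdir u g x = deriv (\<lambda>s. g (x + s *\<^sub>R u)) 0"

coinductive smooth :: "('a::euclidean_space \<Rightarrow> real) \<Rightarrow> bool" where
  "\<lbrakk>\<forall>x. g differentiable (at x); \<forall>u\<in>Basis. smooth (pdir u g)\<rbrakk> \<Longrightarrow> smooth g"

definition px :: "3 \<Rightarrow> (real^3 \<Rightarrow> real) \<Rightarrow> real^3 \<Rightarrow> real" where
  "px i g x = pdir (axis i 1) g x"

definition grad3 :: "(real^3 \<Rightarrow> real) \<Rightarrow> real^3 \<Rightarrow> real^3" where
  "grad3 g x = (\<chi> i. px i g x)"

definition lap :: "(real^3 \<Rightarrow> real) \<Rightarrow> real^3 \<Rightarrow> real" where
  "lap g x = (\<Sum>i\<in>UNIV. px i (px i g) x)"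

definition xperp :: "real^3 \<Rightarrow> real^2" where
  "xperp x = vector [x$1, x$2]"

definition wperp :: "real^3 \<Rightarrow> real" where
  "wperp v = sqrt ((v$1)\<^sup>2 + (v$2)\<^sup>2)"

definition vperp :: "real^3 \<Rightarrow> real^3" where
  "vperp v = vector [v$2, -(v$1), 0]"

text \<open>e_theta = (-sin theta, cos theta), expressed in Cartesian velocity coordinates
  (meaningful for v_perp \<noteq> 0).\<close>
definition e_theta :: "real^3 \<Rightarrow> real^2" where
  "e_theta v = vector [-(v$2) / wperp v, v$1 / wperp v]"

definition gyro :: "(real^3 \<Rightarrow> real) \<Rightarrow> real \<Rightarrow> real \<Rightarrow> real" where
  "gyro g w u = 1 / (2 * pi) * integral {0..2*pi} (\<lambda>\<theta>. g (vector [w * cos \<theta>, w * sin \<theta>, u]))"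

definition f0_of :: "(real \<Rightarrow> real^3 \<Rightarrow> real \<Rightarrow> real \<Rightarrow> real) \<Rightarrow> real \<Rightarrow> real^3 \<Rightarrow> real^3 \<Rightarrow> real" where
  "f0_of F t x v = F t x (wperp v) (v$3)"

definition Lop :: "(real \<Rightarrow> real^2 \<Rightarrow> real) \<Rightarrow> (real \<Rightarrow> real^3 \<Rightarrow> real^3 \<Rightarrow> real) \<Rightarrow> real \<Rightarrow> real^3 \<Rightarrow> real^3 \<Rightarrow> real" where
  "Lop b f t x v = - b t (xperp x) * (vperp v \<bullet> grad3 (f t x) v)"

definition solves_L1 :: "(real \<Rightarrow> real^2 \<Rightarrow> real) \<Rightarrow> (real \<Rightarrow> real^3 \<Rightarrow> real \<Rightarrow> real \<Rightarrow> real)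
    \<Rightarrow> (real \<Rightarrow> real^3 \<Rightarrow> real) \<Rightarrow> (real \<Rightarrow> real^3 \<Rightarrow> real^3 \<Rightarrow> real) \<Rightarrow> bool" where
  "solves_L1 b F phiF f1 \<longleftrightarrow>
     (\<forall>t\<ge>0. \<forall>x v. f1 t x differentiable (at v) \<and>
        Lop b f1 t x v =
          v \<bullet> grad3 (\<lambda>y. f0_of F t y v) x + (- grad3 (phiF t) x) \<bullet> grad3 (f0_of F t x) v)"

definition drift_cond :: "(real \<Rightarrow> real^3 \<Rightarrow> real \<Rightarrow> real \<Rightarrow> real) \<Rightarrow> (real \<Rightarrow> real^3 \<Rightarrow> real) \<Rightarrow> bool" where
  "drift_cond F phiF \<longleftrightarrow>
     (\<forall>t\<ge>0. \<forall>x w u. w \<ge> 0 \<longrightarrow>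
        u * px 3 (\<lambda>y. F t y w u) x - px 3 (phiF t) x * deriv (\<lambda>s. F t x w s) u = 0)"

definition Gvec :: "(real \<Rightarrow> real^3 \<Rightarrow> real \<Rightarrow> real \<Rightarrow> real) \<Rightarrow> (real \<Rightarrow> real^3 \<Rightarrow> real)
    \<Rightarrow> real \<Rightarrow> real^3 \<Rightarrow> real \<Rightarrow> real \<Rightarrow> real^2" where
  "Gvec F phiF t x w u = vector
     [w * px 1 (\<lambda>y. F t y w u) x - px 1 (phiF t) x * deriv (\<lambda>s. F t x s u) w,
      w * px 2 (\<lambda>y. F t y w u) x - px 2 (phiF t) x * deriv (\<lambda>s. F t x s u) w]"

definition poisson_red :: "(real \<Rightarrow> real^3 \<Rightarrow> real) \<Rightarrow> (real \<Rightarrow> real^3 \<Rightarrow> real \<Rightarrow> real \<Rightarrow> real) \<Rightarrow> bool" where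
  "poisson_red phi Q \<longleftrightarrow>
     (\<forall>t\<ge>0. \<forall>x. has_bochner_integral lborel
        (\<lambda>p::real \<times> real. indicator ({0..} \<times> UNIV) p * (2 * pi * Q t x (fst p) (snd p) * fst p))
        (- lap (phi t) x))"

definition poisson_full :: "(real \<Rightarrow> real^3 \<Rightarrow> real) \<Rightarrow> (real \<Rightarrow> real^3 \<Rightarrow> real^3 \<Rightarrow> real) \<Rightarrow> bool" where
  "poisson_full phi f \<longleftrightarrow>
     (\<forall>t\<ge>0. \<forall>x. has_bochner_integral lborel (f t x) (- lap (phi t) x))"

end

theory Submission
  imports Defs
begin

definition T3 :: "(real \<times> real) \<times> real \<Rightarrow> real^3" where
  "T3 p = vector [fst (fst p), snd (fst p), snd p]"

lemma vector3_eq: "(vector [a,b,c] :: real^3) = a *\<^sub>R axis 1 1 + b *\<^sub>R axis 2 1 + c *\<^sub>R axis 3 1"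
  by (simp add: vec_eq_iff forall_3 axis_def)

lemma T3_meas[measurable]: "T3 \<in> borel_measurable borel"
  unfolding T3_def vector3_eq
  by (intro borel_measurable_continuous_onI continuous_intros)

lemma prod_Basis3: "(\<Prod>b\<in>(Basis::(real^3) set). h b) = h (axis 1 1) * h (axis 2 1) * h (axis 3 1)"
proof -
  have B: "(Basis::(real^3) set) = {axis 1 1, axis 2 1, axis 3 1}"
    unfolding Basis_vec_def by (auto, metis exhaust_3)
  have d: "axis (1::3) (1::real) \<noteq> axis 2 1" "axis (1::3) (1::real) \<noteq> axis 3 1" "axis (2::3) (1::real) \<noteq> axis 3 1"
    by (auto simp: axis_eq_axis)
  show ?thesis unfolding B using d by (simp add: mult.assoc)
qed

lemma distr_T3: "distr lborel borel T3 = (lborel :: (real^3) measure)"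
proof (rule lborel_eqI[symmetric])
  fix l u :: "real^3"
  assume le: "\<And>b. b \<in> Basis \<Longrightarrow> l \<bullet> b \<le> u \<bullet> b"
  have le': "l$i \<le> u$i" for i
    using le[of "axis i 1"] by (auto simp: Basis_vec_def cart_eq_inner_axis)
  have pre: "T3 -` box l u = ({l$1<..<u$1} \<times> {l$2<..<u$2}) \<times> {l$3<..<u$3}"
    unfolding T3_def by (auto simp: mem_box_cart forall_3)
  have "emeasure (distr lborel borel T3) (box l u) = emeasure lborel (T3 -` box l u)"
    by (subst emeasure_distr) auto
  also have "\<dots> = emeasure (lborel \<Otimes>\<^sub>M lborel) (({l$1<..<u$1} \<times> {l$2<..<u$2}) \<times> {l$3<..<u$3})"
    unfolding pre lborel_prod ..
  also have "\<dots> = emeasure lborel ({l$1<..<u$1} \<times> {l$2<..<u$2}) * emeasure lborel {l$3<..<u$3}"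
    by (intro lborel.emeasure_pair_measure_Times) (auto intro!: borel_open open_Times)
  also have "emeasure lborel ({l$1<..<u$1} \<times> {l$2<..<u$2}) = emeasure (lborel \<Otimes>\<^sub>M lborel) ({l$1<..<u$1} \<times> {l$2<..<u$2})"
    unfolding lborel_prod ..
  also have "\<dots> = emeasure lborel {l$1<..<u$1} * emeasure lborel {l$2<..<u$2}"
    by (intro lborel.emeasure_pair_measure_Times) auto
  finally show "emeasure (distr lborel borel T3) (box l u) = (\<Prod>b\<in>Basis. (u - l) \<bullet> b)"
    using le' unfolding prod_Basis3
    by (simp add: cart_eq_inner_axis[symmetric] ennreal_mult[symmetric] inner_diff_left)
qed simp

definition g3 :: "real^3 \<Rightarrow> real^3" where
  "g3 y = vector [y$1 * cos (y$3), y$1 * sin (y$3), y$2]"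

definition g3' :: "real^3 \<Rightarrow> real^3 \<Rightarrow> real^3" where
  "g3' y h = vector [h$1 * cos (y$3) - y$1 * sin (y$3) * h$3, h$1 * sin (y$3) + y$1 * cos (y$3) * h$3, h$2]"

definition S3 :: "(real^3) set" where
  "S3 = {y. 0 < y$1 \<and> 0 < y$3 \<and> y$3 < 2*pi}"

lemma g3_deriv: "(g3 has_derivative g3' y) (at y)"
proof -
  have e: "g3' y = (\<lambda>h. (h$1 * cos (y$3) + y$1 * (- sin (y$3) * h$3)) *\<^sub>R axis 1 1
     + (h$1 * sin (y$3) + y$1 * (cos (y$3) * h$3)) *\<^sub>R axis 2 1 + h$2 *\<^sub>R axis 3 1)"
    by (auto simp: g3'_def vector3_eq fun_eq_iff algebra_simps)
  show ?thesis unfolding e unfolding g3_def vector3_eq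
    by (rule derivative_eq_intros bounded_linear.has_derivative[OF bounded_linear_vec_nth] refl)+
       (auto simp: algebra_simps)
qed

lemma det_g3': "det (matrix (g3' y)) = - y$1"
proof -
  have "det (matrix (g3' y)) = - y$1 * (cos (y$3))^2 - y$1 * (sin (y$3))^2"
    by (simp add: det_3 matrix_def g3'_def vector_3 axis_def algebra_simps power2_eq_square)
  also have "\<dots> = - y$1" by (simp add: algebra_simps flip: distrib_left) 
  finally show ?thesis .
qed

lemma S3_leb: "S3 \<in> sets lebesgue"
proof -
  have "open S3" unfolding S3_def
    by (intro open_Collect_conj open_Collect_less continuous_intros)
  then show ?thesis by (intro sets_completionI_sets) (auto intro: borel_open)
qed

lemma g3_inj: "inj_on g3 S3"
proof (rule inj_onI)
  fix x y assume x: "x \<in> S3" and y: "y \<in> S3" and e: "g3 x = g3 y"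
  have e1: "x$1 * cos (x$3) = y$1 * cos (y$3)" and e2: "x$1 * sin (x$3) = y$1 * sin (y$3)"
    and e3: "x$2 = y$2"
    using e by (auto simp: g3_def vec_eq_iff forall_3)
  have "(x$1)^2 = (y$1)^2"
  proof -
    have "(x$1)^2 = (x$1 * cos (x$3))^2 + (x$1 * sin (x$3))^2"
      by (simp add: power_mult_distrib flip: distrib_left)
    also have "\<dots> = (y$1 * cos (y$3))^2 + (y$1 * sin (y$3))^2" using e1 e2 by simp
    also have "\<dots> = (y$1)^2" by (simp add: power_mult_distrib flip: distrib_left)
    finally show ?thesis .
  qed
  then have r: "x$1 = y$1" using x y by (simp add: S3_def power2_eq_iff_nonneg)
  then have "cos (x$3) = cos (y$3)" "sin (x$3) = sin (y$3)" using e1 e2 x by (auto simp: S3_def)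
  then obtain n :: int where n: "x$3 = y$3 + 2*pi*n" using sin_cos_eq_iff by metis
  have "n = 0"
  proof -
    have h: "0 < y$3" "y$3 < 2*pi" "0 < x$3" "x$3 < 2*pi" using x y by (auto simp: S3_def)
    have a: "2*pi*(-1) < 2*pi*n" "2*pi*n < 2*pi*1" using n h by linarith+
    have "-1 < real_of_int n" using a(1) pi_gt_zero by (simp only: mult_less_cancel_left)
    moreover have "real_of_int n < 1" using a(2) pi_gt_zero by (simp only: mult_less_cancel_left)
    ultimately show ?thesis by linarith
  qed
  then have "x$3 = y$3" using n by simp
  then show "x = y" using r e3 by (simp add: vec_eq_iff forall_3)
qed

lemma g3_image: "UNIV - g3 ` S3 \<subseteq> {v. v$2 = 0}"
proof
  fix v :: "real^3" assume v: "v \<in> UNIV - g3 ` S3"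
  show "v \<in> {v. v$2 = 0}"
  proof (rule ccontr)
    assume "v \<notin> {v. v$2 = 0}"
    then have v2: "v$2 \<noteq> 0" by simp
    define r where "r = sqrt ((v$1)^2 + (v$2)^2)"
    have rpos: "r > 0" unfolding r_def using v2 by (simp add: add_nonneg_pos)
    have "(v$1/r)^2 + (v$2/r)^2 = 1"
      using rpos v2 unfolding r_def by (simp add: power_divide flip: add_divide_distrib)
    then obtain t where t: "0 \<le> t" "t < 2*pi" "v$1/r = cos t" "v$2/r = sin t"
      using sincos_total_2pi by metis
    have t0: "t \<noteq> 0" using t v2 rpos by auto
    have "g3 (vector [r, v$3, t]) = v"
      using t rpos by (auto simp: g3_def vec_eq_iff forall_3 field_simps)
    moreover have "vector [r, v$3, t] \<in> S3" using t t0 rpos by (simp add: S3_def vector_3)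
    ultimately show False using v by (metis DiffD2 image_eqI)
  qed
qed

lemma polar_cov:
  fixes f :: "real^3 \<Rightarrow> real"
  assumes fi: "integrable lborel f"
  shows "(\<lambda>y. y$1 * f (g3 y)) absolutely_integrable_on S3 \<and>
         integral S3 (\<lambda>y. y$1 * f (g3 y)) = integral\<^sup>L lborel f"
proof -
  define I where "I = integral\<^sup>L lborel f"
  have fm: "f \<in> borel_measurable borel" using borel_measurable_integrable[OF fi] by simp
  have "integrable lebesgue f" using fi fm by (simp add: integrable_completion)
  then have fU: "f absolutely_integrable_on UNIV" by (simp add: set_integrable_def)
  have IU: "integral UNIV f = I" unfolding I_def by (rule integral_lborel[OF fi])
  have neg: "negligible {x \<in> UNIV - g3 ` S3. f x \<noteq> 0}"
    by (rule negligible_subset[OF negligible_standard_hyperplane_cart[of 2]]) (use g3_image in auto)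
  have neg0: "negligible {x \<in> g3 ` S3 - UNIV. f x \<noteq> 0}" by simp
  have fS: "f absolutely_integrable_on g3 ` S3"
    by (rule absolutely_integrable_spike_set[OF fU neg neg0])
  have IS: "integral (g3 ` S3) f = I"
    using integral_spike_set[OF neg neg0] IU by simp
  have blv: "bounded_linear (vec :: real \<Rightarrow> real^1)"
    using linear_conv_bounded_linear linear_vec by blast
  define f' where "f' = (\<lambda>v. vec (f v) :: real^1)"
  have f'S: "f' absolutely_integrable_on g3 ` S3"
    using absolutely_integrable_linear[OF fS blv] by (simp add: f'_def o_def)
  have I'S: "integral (g3 ` S3) f' = vec I"
    using integral_linear[OF set_lebesgue_integral_eq_integral(1)[OF fS] blv] IS
    by (simp add: f'_def o_def)
  have cov: "(\<lambda>x. \<bar>det (matrix (g3' x))\<bar> *\<^sub>R f'(g3 x)) absolutely_integrable_on S3 \<and>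
           integral S3 (\<lambda>x. \<bar>det (matrix (g3' x))\<bar> *\<^sub>R f'(g3 x)) = vec I"
    by (rule has_absolute_integral_change_of_variables[OF S3_leb _ g3_inj, THEN iffD2])
       (use f'S I'S in \<open>auto intro: has_derivative_at_withinI g3_deriv\<close>)
  define h where "h = (\<lambda>x. \<bar>det (matrix (g3' x))\<bar> *\<^sub>R f'(g3 x))"
  have hc: "(\<lambda>x. h x $ 1) = (\<lambda>x. \<bar>x$1\<bar> * f (g3 x))"
    by (simp add: h_def det_g3' f'_def)
  have h1: "(\<lambda>x. \<bar>x$1\<bar> * f (g3 x)) absolutely_integrable_on S3"
    using absolutely_integrable_linear[OF cov[folded h_def, THEN conjunct1] bounded_linear_vec_nth[of 1]]
    by (simp add: o_def hc)
  have h2: "integral S3 (\<lambda>x. \<bar>x$1\<bar> * f (g3 x)) = I"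
    using integral_linear[OF set_lebesgue_integral_eq_integral(1)[OF cov[folded h_def, THEN conjunct1]] bounded_linear_vec_nth[of 1]]
      cov[folded h_def, THEN conjunct2]
    by (simp add: o_def hc)
  have eqS: "\<And>x. x \<in> S3 \<Longrightarrow> \<bar>x$1\<bar> * f (g3 x) = x$1 * f (g3 x)" by (simp add: S3_def)
  have "(\<lambda>y. y$1 * f (g3 y)) absolutely_integrable_on S3"
    using absolutely_integrable_spike_eq[of "{}" S3 "\<lambda>x. \<bar>x$1\<bar> * f (g3 x)" "\<lambda>y. y$1 * f (g3 y)"] h1 eqS
    by auto
  moreover have "integral S3 (\<lambda>y. y$1 * f (g3 y)) = I"
    using h2 eqS by (metis (no_types, lifting) integral_cong)
  ultimately show ?thesis unfolding I_def by simp
qed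

lemma g3_cont: "continuous_on UNIV g3"
  unfolding g3_def vector3_eq by (intro continuous_intros)

lemma S3_open: "open S3"
  unfolding S3_def by (intro open_Collect_conj open_Collect_less continuous_intros)

lemma inner_polar:
  fixes f :: "real^3 \<Rightarrow> real"
  assumes fc: "continuous_on UNIV f"
  shows "(\<integral>\<theta>. indicator S3 (T3 (p, \<theta>)) * ((T3 (p, \<theta>))$1 * f (g3 (T3 (p, \<theta>)))) \<partial>lborel)
       = indicator ({0..}\<times>UNIV) p * (2*pi * gyro f (fst p) (snd p) * fst p)"
proof -
  obtain r u where p: "p = (r, u)" by (cases p)
  define c where "c = (\<lambda>\<theta>. f (vector [r * cos \<theta>, r * sin \<theta>, u]))"
  have cc: "continuous_on UNIV c" unfolding c_def
    by (rule continuous_on_compose2[OF fc]) (auto simp: vector3_eq intro!: continuous_intros)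
  have T: "T3 (p, \<theta>) = vector [r, u, \<theta>]" for \<theta> by (simp add: T3_def p)
  have G: "g3 (vector [r, u, \<theta>]) = vector [r * cos \<theta>, r * sin \<theta>, u]" for \<theta>
    by (simp add: g3_def)
  show ?thesis
  proof (cases "r > 0")
    case False
    then have "indicator S3 (T3 (p, \<theta>)) = (0::real)" for \<theta> by (simp add: T S3_def indicator_def)
    moreover have "indicator ({0..}\<times>UNIV) p * (2*pi * gyro f (fst p) (snd p) * fst p) = (0::real)"
      using False by (cases "r = 0") (auto simp: p indicator_def)
    ultimately show ?thesis by simp
  next
    case True
    have ind: "indicator S3 (vector [r, u, \<theta>]) = (indicator {0<..<2*pi} \<theta> :: real)" for \<theta>
      using True by (simp add: S3_def indicator_def)
    have ci: "set_integrable lborel {0..2*pi} c"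
      unfolding set_integrable_def
      by (rule borel_integrable_compact) (auto intro: continuous_on_subset[OF cc])
    have ci': "set_integrable lborel {0<..<2*pi} c"
      by (rule set_integrable_subset[OF ci]) auto
    have "(\<integral>\<theta>. indicator S3 (T3 (p, \<theta>)) * ((T3 (p, \<theta>))$1 * f (g3 (T3 (p, \<theta>)))) \<partial>lborel)
        = (\<integral>\<theta>. r * (indicator {0<..<2*pi} \<theta> *\<^sub>R c \<theta>) \<partial>lborel)"
      by (rule Bochner_Integration.integral_cong) (auto simp: ind T G c_def)
    also have "\<dots> = r * (LINT \<theta>:{0<..<2*pi}|lborel. c \<theta>)"
      by (simp add: set_lebesgue_integral_def)
    also have "\<dots> = r * integral {0<..<2*pi} c"
      using set_borel_integral_eq_integral(2)[OF ci'] by simp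
    also have "\<dots> = r * integral {0..2*pi} c"
      by (simp add: integral_open_interval_real)
    also have "\<dots> = indicator ({0..}\<times>UNIV) p * (2*pi * gyro f (fst p) (snd p) * fst p)"
      using True by (simp add: p gyro_def c_def indicator_def)
    finally show ?thesis .
  qed
qed

lemma polar:
  fixes f :: "real^3 \<Rightarrow> real"
  assumes fc: "continuous_on UNIV f" and fb: "has_bochner_integral lborel f I"
  shows "has_bochner_integral lborel
           (\<lambda>p::real\<times>real. indicator ({0..}\<times>UNIV) p * (2*pi * gyro f (fst p) (snd p) * fst p)) I"
proof -
  have fi: "integrable lborel f" and fI: "integral\<^sup>L lborel f = I"
    using fb by (auto simp: has_bochner_integral_iff)
  note A = polar_cov[OF fi]
  define K where "K = (\<lambda>y::real^3. indicator S3 y * (y$1 * f (g3 y)))"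
  have fm[measurable]: "f \<in> borel_measurable borel" using fc by (rule borel_measurable_continuous_onI)
  have gm[measurable]: "g3 \<in> borel_measurable borel" using g3_cont by (rule borel_measurable_continuous_onI)
  have Sm[measurable]: "S3 \<in> sets borel" using S3_open by (rule borel_open)
  have Km[measurable]: "K \<in> borel_measurable borel" unfolding K_def by measurable
  have "integrable lebesgue K"
    using A unfolding set_integrable_def K_def by simp
  then have Ki: "integrable lborel K" using Km by (simp add: integrable_completion)
  have "integral\<^sup>L lebesgue K = integral S3 (\<lambda>y. y$1 * f (g3 y))"
    using set_lebesgue_integral_eq_integral(2)[OF A[THEN conjunct1]]
    unfolding set_lebesgue_integral_def K_def by simp
  then have KI: "integral\<^sup>L lborel K = I"
    using A fI Km by (simp add: integral_completion)
  have Ki': "integrable lborel (\<lambda>q. K (T3 q))"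
    using Ki unfolding distr_T3[symmetric] by (subst (asm) integrable_distr_eq) auto
  have KI': "integral\<^sup>L lborel (\<lambda>q. K (T3 q)) = I"
    using KI unfolding distr_T3[symmetric] by (subst (asm) integral_distr) auto
  have Ki2: "integrable (lborel \<Otimes>\<^sub>M lborel) (\<lambda>q. K (T3 q))"
    using Ki' by (simp add: lborel_prod)
  have i1: "integrable lborel (\<lambda>p. \<integral>\<theta>. K (T3 (p, \<theta>)) \<partial>lborel)"
    using lborel_pair.integrable_fst'[OF Ki2] by simp
  have i2: "(\<integral>p. (\<integral>\<theta>. K (T3 (p, \<theta>)) \<partial>lborel) \<partial>lborel) = I"
    using lborel_pair.integral_fst'[OF Ki2] KI' by (simp add: lborel_prod)
  have eq: "(\<lambda>p. \<integral>\<theta>. K (T3 (p, \<theta>)) \<partial>lborel) =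
      (\<lambda>p::real\<times>real. indicator ({0..}\<times>UNIV) p * (2*pi * gyro f (fst p) (snd p) * fst p))"
    unfolding K_def using inner_polar[OF fc] by auto
  show ?thesis using i1 i2 unfolding eq by (simp add: has_bochner_integral_iff)
qed

lemma pdir_DERIV:
  fixes g :: "'a::real_normed_vector \<Rightarrow> real"
  assumes g: "(g has_derivative g') (at x)"
  shows "((\<lambda>s. g (x + s *\<^sub>R u)) has_real_derivative g' u) (at 0)"
proof -
  have bl: "bounded_linear g'" using g by (rule has_derivative_bounded_linear)
  have l: "((\<lambda>s. x + s *\<^sub>R u) has_derivative (\<lambda>s. s *\<^sub>R u)) (at 0)"
    by (rule derivative_eq_intros refl)+ simp
  have g0: "(g has_derivative g') (at (x + 0 *\<^sub>R u))" using g by simp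
  have "((\<lambda>s. g (x + s *\<^sub>R u)) has_derivative (\<lambda>s. g' (s *\<^sub>R u))) (at 0)"
    using has_derivative_compose[OF l g0] by (simp add: o_def)
  moreover have "(\<lambda>s. g' (s *\<^sub>R u)) = (\<lambda>s. s * g' u)"
    using bl by (auto simp: linear_simps)
  moreover have "(\<lambda>s. s * g' u) = (*) (g' u)" by (auto simp: fun_eq_iff)
  ultimately show ?thesis
    by (simp add: has_field_derivative_def)
qed

lemma pdir_frechet:
  fixes g :: "'a::real_normed_vector \<Rightarrow> real"
  assumes g: "(g has_derivative g') (at x)"
  shows "pdir u g x = g' u"
proof -
  have bl: "bounded_linear g'" using g by (rule has_derivative_bounded_linear)
  have l: "((\<lambda>s. x + s *\<^sub>R u) has_derivative (\<lambda>s. s *\<^sub>R u)) (at 0)"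
    by (rule derivative_eq_intros refl)+ simp
  have g0: "(g has_derivative g') (at (x + 0 *\<^sub>R u))" using g by simp
  have "((\<lambda>s. g (x + s *\<^sub>R u)) has_derivative (\<lambda>s. g' (s *\<^sub>R u))) (at 0)"
    using has_derivative_compose[OF l g0] by (simp add: o_def)
  moreover have "(\<lambda>s. g' (s *\<^sub>R u)) = (\<lambda>s. s * g' u)"
    using bl by (auto simp: linear_simps)
  moreover have "(\<lambda>s. s * g' u) = (*) (g' u)" by (auto simp: fun_eq_iff)
  ultimately have "((\<lambda>s. g (x + s *\<^sub>R u)) has_field_derivative g' u) (at 0)"
    by (simp add: has_field_derivative_def)
  then show ?thesis unfolding pdir_def by (rule DERIV_imp_deriv)
qed

lemma grad_lin:
  fixes h :: "real^3 \<Rightarrow> real"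
  assumes h: "(h has_derivative h') (at y)"
  shows "h' a = a \<bullet> grad3 h y"
proof -
  have bl: "linear h'" using has_derivative_bounded_linear[OF h] bounded_linear.linear by blast
  have "h' a = h' (\<Sum>i\<in>UNIV. (a$i) *\<^sub>R axis i 1)"
    using basis_expansion[of a] by (simp add: scalar_mult_eq_scaleR)
  also have "\<dots> = (\<Sum>i\<in>UNIV. a$i * h' (axis i 1))"
    by (simp add: linear_sum[OF bl] linear_scale[OF bl])
  also have "\<dots> = a \<bullet> grad3 h y"
    by (simp add: inner_vec_def grad3_def px_def pdir_frechet[OF h])
  finally show ?thesis .
qed

definition rot :: "real \<Rightarrow> real^3 \<Rightarrow> real^3" where
  "rot s v = vector [v$1 * cos s - v$2 * sin s, v$1 * sin s + v$2 * cos s, v$3]"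

lemma rot_aux: "((a::real) * c - b * s)^2 + (a * s + b * c)^2 = (a^2+b^2)*(s^2+c^2)"
  by (simp add: power2_eq_square algebra_simps)

lemma rot_wperp: "wperp (rot s v) = wperp v"
proof -
  have "(v$1 * cos s - v$2 * sin s)^2 + (v$1 * sin s + v$2 * cos s)^2
        = ((v$1)^2 + (v$2)^2) * ((sin s)^2 + (cos s)^2)"
    by (rule rot_aux)
  then show ?thesis by (simp add: wperp_def rot_def)
qed

lemma rot_3[simp]: "(rot s v)$3 = v$3" by (simp add: rot_def)
lemma rot_0[simp]: "rot 0 v = v" by (simp add: rot_def vec_eq_iff forall_3)
lemma rot_2pi: "rot (2*pi) v = v" by (simp add: rot_def vec_eq_iff forall_3)

lemma rot_deriv:
  "((\<lambda>s. rot s v) has_derivative (\<lambda>d. d *\<^sub>R (- vperp (rot s v)))) (at s)"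
proof -
  have a1: "((\<lambda>s. v$1 * cos s - v$2 * sin s) has_real_derivative (- v$1 * sin s - v$2 * cos s)) (at s)"
    by (auto intro!: derivative_eq_intros)
  have a2: "((\<lambda>s. v$1 * sin s + v$2 * cos s) has_real_derivative (v$1 * cos s - v$2 * sin s)) (at s)"
    by (auto intro!: derivative_eq_intros)
  have "((\<lambda>s. (v$1 * cos s - v$2 * sin s) *\<^sub>R axis 1 1 + (v$1 * sin s + v$2 * cos s) *\<^sub>R axis 2 1 + v$3 *\<^sub>R (axis 3 1 :: real^3))
     has_derivative (\<lambda>d. ((- v$1 * sin s - v$2 * cos s) * d) *\<^sub>R axis 1 1 + ((v$1 * cos s - v$2 * sin s) * d) *\<^sub>R axis 2 1 + 0)) (at s)"
    by (intro has_derivative_add has_derivative_scaleR_left has_derivative_const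
        a1[unfolded has_field_derivative_def, THEN has_derivative_eq_rhs]
        a2[unfolded has_field_derivative_def, THEN has_derivative_eq_rhs]) (auto simp: fun_eq_iff)
  then show ?thesis unfolding rot_def vector3_eq
    by (rule has_derivative_eq_rhs)
       (auto simp: fun_eq_iff vec_eq_iff forall_3 vperp_def algebra_simps axis_def)
qed

lemma circ_deriv:
  fixes h :: "real^3 \<Rightarrow> real"
  assumes h: "h differentiable (at (rot s v))"
  shows "((\<lambda>s. h (rot s v)) has_real_derivative (- (vperp (rot s v) \<bullet> grad3 h (rot s v)))) (at s)"
proof -
  obtain h' where h': "(h has_derivative h') (at (rot s v))" using h by (auto simp: differentiable_def)
  have bl: "bounded_linear h'" using h' by (rule has_derivative_bounded_linear)
  have "((\<lambda>s. h (rot s v)) has_derivative (\<lambda>d. h' (d *\<^sub>R (- vperp (rot s v))))) (at s)"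
    using has_derivative_compose[OF rot_deriv h'] by (simp add: o_def)
  moreover have "(\<lambda>d. h' (d *\<^sub>R (- vperp (rot s v)))) = (\<lambda>d. (- (vperp (rot s v) \<bullet> grad3 h (rot s v))) * d)"
  proof
    fix d
    have "h' (d *\<^sub>R (- vperp (rot s v))) = d * h' (- vperp (rot s v))"
      using bl by (simp add: linear_simps)
    also have "h' (- vperp (rot s v)) = (- vperp (rot s v)) \<bullet> grad3 h (rot s v)"
      by (rule grad_lin[OF h'])
    finally show "h' (d *\<^sub>R (- vperp (rot s v))) = (- (vperp (rot s v) \<bullet> grad3 h (rot s v))) * d"
      by simp
  qed
  ultimately show ?thesis by (simp only: has_field_derivative_def)
qed

lemma even_deriv0:
  fixes h :: "real \<Rightarrow> real"
  assumes "DERIV h 0 :> d" "\<And>s. h (-s) = h s"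
  shows "d = 0"
proof -
  have "DERIV (\<lambda>s. h (-s)) 0 :> d * (-1)"
    by (rule DERIV_chain2[of h]) (use assms in \<open>auto intro!: derivative_eq_intros\<close>)
  then have "DERIV h 0 :> - d" using assms(2) by simp
  then have "d = - d" using DERIV_unique assms(1) by blast
  then show ?thesis by simp
qed

lemma smooth_diff: "smooth g \<Longrightarrow> g differentiable (at p)"
  by (erule smooth.cases) auto

lemma smooth_pdir: "smooth g \<Longrightarrow> u \<in> Basis \<Longrightarrow> smooth (pdir u g)"
  by (erule smooth.cases) auto

lemma Basis_x: "(axis i 1 :: real^3, 0 :: real^3) \<in> Basis"
  by (simp add: Basis_prod_def)
lemma Basis_v: "(0 :: real^3, axis i 1 :: real^3) \<in> Basis"
  by (simp add: Basis_prod_def)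

lemma px_slice_v: "px i (\<lambda>v. g (x, v)) v = pdir (0, axis i 1) g (x, v)"
  unfolding px_def pdir_def by simp

lemma px_slice_x: "px i (\<lambda>y. g (y, v)) x = pdir (axis i 1, 0) g (x, v)"
  unfolding px_def pdir_def by simp

lemma diff_slice_v:
  fixes g :: "(real^3) \<times> (real^3) \<Rightarrow> real"
  assumes "g differentiable (at (x, v))"
  shows "(\<lambda>v. g (x, v)) differentiable (at v)"
proof -
  have "(\<lambda>v. (x, v)) differentiable (at v)"
    by (rule differentiable_Pair) (auto intro: differentiable_const differentiable_ident)
  then show ?thesis using differentiable_chain_at[of "\<lambda>v. (x, v)" v g] assms by (simp add: o_def)
qed

lemma DERIV_rot_inner: "((\<lambda>s. c \<bullet> rot s v) has_real_derivative (c \<bullet> (- vperp (rot s v)))) (at s)"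
proof -
  have "((\<lambda>s. c \<bullet> rot s v) has_derivative (\<lambda>d. c \<bullet> (d *\<^sub>R (- vperp (rot s v))))) (at s)"
    using has_derivative_compose[OF rot_deriv bounded_linear_inner_right[THEN bounded_linear.has_derivative, OF has_derivative_ident]]
    by (simp add: o_def)
  moreover have "(\<lambda>d. c \<bullet> (d *\<^sub>R (- vperp (rot s v)))) = (*) (c \<bullet> (- vperp (rot s v)))"
    by (auto simp: fun_eq_iff)
  ultimately show ?thesis by (simp add: has_field_derivative_def)
qed

lemma wperp_sq: "(wperp v)^2 = (v$1)^2 + (v$2)^2"
  by (simp add: wperp_def)

lemma wperp_nonneg: "wperp v \<ge> 0"
  by (simp add: wperp_def)

lemma wperp_zero: "wperp v = 0 \<longleftrightarrow> v$1 = 0 \<and> v$2 = 0"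
  by (simp add: wperp_def add_nonneg_eq_0_iff)

lemma deriv_shift0: "deriv (\<lambda>s. h (u + s)) 0 = deriv h (u::real)"
proof -
  have "(\<lambda>D. DERIV (\<lambda>s. h (u + s)) 0 :> D) = (\<lambda>D. DERIV h u :> D)"
    using DERIV_shift[of h _ 0 u] by (auto simp: fun_eq_iff add.commute)
  then show ?thesis unfolding deriv_def by simp
qed

locale f0loc =
  fixes ff :: "(real^3) \<times> (real^3) \<Rightarrow> real" and FF :: "real^3 \<Rightarrow> real \<Rightarrow> real \<Rightarrow> real"
  assumes sm: "smooth ff" and fe: "\<And>x v. ff (x, v) = FF x (wperp v) (v$3)"
begin

lemma hdiff: "(\<lambda>v. ff (x, v)) differentiable (at v)"
  by (rule diff_slice_v[OF smooth_diff[OF sm]])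

lemma rotinv: "vperp v \<bullet> grad3 (\<lambda>v. ff (x, v)) v = 0"
proof -
  have d: "((\<lambda>s. ff (x, rot s v)) has_real_derivative (- (vperp (rot 0 v) \<bullet> grad3 (\<lambda>v. ff (x, v)) (rot 0 v)))) (at 0)"
    by (rule circ_deriv[of "\<lambda>v. ff (x, v)", OF hdiff])
  have "(\<lambda>s. ff (x, rot s v)) = (\<lambda>s. ff (x, v))"
    by (auto simp: fe rot_wperp)
  then have "((\<lambda>s. ff (x, rot s v)) has_real_derivative 0) (at 0)" by simp
  then have "- (vperp (rot 0 v) \<bullet> grad3 (\<lambda>v. ff (x, v)) (rot 0 v)) = 0" by (rule DERIV_unique[OF d])
  then show ?thesis by simp
qed

lemma Fx: "px i (\<lambda>y. FF y (wperp v) (v$3)) x = px i (\<lambda>y. ff (y, v)) x"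
  by (simp add: fe)

lemma Fu: "deriv (\<lambda>s. FF x (wperp v) s) (v$3) = px 3 (\<lambda>v. ff (x, v)) v"
proof -
  have w: "wperp (v + s *\<^sub>R axis 3 1) = wperp v" for s by (simp add: wperp_def axis_def)
  have c3: "(v + s *\<^sub>R axis 3 1)$3 = v$3 + s" for s by (simp add: axis_def)
  have "px 3 (\<lambda>v. ff (x, v)) v = deriv (\<lambda>s. FF x (wperp v) (v$3 + s)) 0"
    unfolding px_def pdir_def by (simp only: fe w c3)
  then show ?thesis by (simp add: deriv_shift0)
qed

lemma ew:
  assumes w: "wperp v > 0"
  shows "deriv (\<lambda>s. FF x s (v$3)) (wperp v) = (v$1 * px 1 (\<lambda>v. ff (x, v)) v + v$2 * px 2 (\<lambda>v. ff (x, v)) v) / wperp v"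
proof -
  define w0 where "w0 = wperp v"
  define e :: "real^3" where "e = vector [v$1, v$2, 0]"
  define q where "q = (\<lambda>s. v + ((s - w0) / w0) *\<^sub>R e)"
  obtain h' where h': "((\<lambda>v. ff (x, v)) has_derivative h') (at v)"
    using hdiff[of x v] by (auto simp: differentiable_def)
  have bl: "bounded_linear h'" using h' by (rule has_derivative_bounded_linear)
  have w0: "w0 > 0" using w by (simp add: w0_def)
  have qd: "(q has_derivative (\<lambda>d. (d / w0) *\<^sub>R e)) (at w0)"
    unfolding q_def by (rule has_derivative_eq_rhs, (rule derivative_eq_intros refl)+) (use w0 in \<open>auto simp: fun_eq_iff\<close>)
  have qw: "q w0 = v" by (simp add: q_def)
  have "((\<lambda>s. ff (x, q s)) has_derivative (\<lambda>d. h' ((d / w0) *\<^sub>R e))) (at w0)"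
    using has_derivative_compose[OF qd, of "\<lambda>v. ff (x, v)" h'] h' qw by (simp add: o_def)
  moreover have "(\<lambda>d. h' ((d / w0) *\<^sub>R e)) = (*) ((e \<bullet> grad3 (\<lambda>v. ff (x, v)) v) / w0)"
    using bl grad_lin[OF h', of e] by (auto simp: fun_eq_iff linear_simps)
  ultimately have D: "((\<lambda>s. ff (x, q s)) has_real_derivative ((e \<bullet> grad3 (\<lambda>v. ff (x, v)) v) / w0)) (at w0)"
    by (simp add: has_field_derivative_def)
  have eqq: "ff (x, q s) = FF x s (v$3)" if s: "s \<in> {0<..}" for s
  proof -
    have c: "1 + (s - w0) / w0 = s / w0" using w by (simp add: w0_def field_simps)
    have q1: "(q s)$1 = (s/w0) * v$1" by (simp add: q_def e_def c[symmetric] algebra_simps)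
    have q2: "(q s)$2 = (s/w0) * v$2" by (simp add: q_def e_def c[symmetric] algebra_simps)
    have "wperp (q s) = sqrt ((s / w0)^2 * ((v$1)^2 + (v$2)^2))"
      by (simp only: wperp_def q1 q2 power_mult_distrib distrib_left)
    also have "\<dots> = (s / w0) * w0"
      using s w by (simp add: real_sqrt_mult w0_def wperp_def)
    also have "\<dots> = s" using w by (simp add: w0_def)
    finally show ?thesis by (simp add: fe q_def e_def)
  qed
  have "((\<lambda>s. FF x s (v$3)) has_real_derivative ((e \<bullet> grad3 (\<lambda>v. ff (x, v)) v) / w0)) (at w0)"
    by (rule has_field_derivative_transform_within_open[OF D, of "{0<..}"]) (use w eqq in \<open>auto simp: w0_def\<close>)
  then have "deriv (\<lambda>s. FF x s (v$3)) w0 = (e \<bullet> grad3 (\<lambda>v. ff (x, v)) v) / w0"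
    by (rule DERIV_imp_deriv)
  then show ?thesis
    by (simp add: w0_def e_def inner_vec_def sum_3 grad3_def)
qed

lemma even_axis:
  assumes "v$1 = 0" "v$2 = 0" and i: "i = 1 \<or> i = 2"
  shows "px i (\<lambda>v. ff (x, v)) v = 0"
proof -
  obtain h' where h': "((\<lambda>v. ff (x, v)) has_derivative h') (at v)"
    using hdiff[of x v] by (auto simp: differentiable_def)
  have D: "((\<lambda>s. ff (x, v + s *\<^sub>R axis i 1)) has_real_derivative h' (axis i 1)) (at 0)"
    by (rule pdir_DERIV[OF h'])
  have w: "wperp (v + (-s) *\<^sub>R axis i 1) = wperp (v + s *\<^sub>R axis i 1)" for s
    using assms i by (auto simp: wperp_def axis_def)
  have c3: "(v + (-s) *\<^sub>R axis i 1)$3 = (v + s *\<^sub>R axis i 1)$3" for s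
    using i by (auto simp: axis_def)
  have "h' (axis i 1) = 0"
    by (rule even_deriv0[OF D]) (simp only: fe w c3)
  then show ?thesis by (simp add: px_def pdir_frechet[OF h'])
qed

lemma VW:
  assumes w: "wperp v > 0"
  shows "px 1 (\<lambda>v. ff (x, v)) v = v$1 * deriv (\<lambda>s. FF x s (v$3)) (wperp v) / wperp v"
    and "px 2 (\<lambda>v. ff (x, v)) v = v$2 * deriv (\<lambda>s. FF x s (v$3)) (wperp v) / wperp v"
proof -
  define P1 where "P1 = px 1 (\<lambda>v. ff (x, v)) v"
  define P2 where "P2 = px 2 (\<lambda>v. ff (x, v)) v"
  define W where "W = wperp v"
  have r: "v$2 * P1 - v$1 * P2 = 0"
    using rotinv[of v x] by (simp add: P1_def P2_def inner_vec_def sum_3 vperp_def grad3_def)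
  have e: "deriv (\<lambda>s. FF x s (v$3)) (wperp v) = (v$1 * P1 + v$2 * P2) / W"
    using ew[OF w, of x] by (simp add: P1_def P2_def W_def)
  have W2: "W^2 = (v$1)^2 + (v$2)^2" by (simp add: W_def wperp_sq)
  have Wp: "W > 0" using w by (simp add: W_def)
  have "v$1 * ((v$1 * P1 + v$2 * P2) / W) / W = P1"
  proof -
    have eq: "v$1 * (v$1 * P1 + v$2 * P2) = W^2 * P1"
      unfolding W2 using r by algebra
    have "v$1 * ((v$1 * P1 + v$2 * P2) / W) / W = (v$1 * (v$1 * P1 + v$2 * P2)) / W^2"
      by (simp add: power2_eq_square)
    also have "\<dots> = P1" using eq Wp by simp
    finally show ?thesis .
  qed
  then show "px 1 (\<lambda>v. ff (x, v)) v = v$1 * deriv (\<lambda>s. FF x s (v$3)) (wperp v) / wperp v"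
    by (simp add: e P1_def W_def)
  have "v$2 * ((v$1 * P1 + v$2 * P2) / W) / W = P2"
  proof -
    have eq: "v$2 * (v$1 * P1 + v$2 * P2) = W^2 * P2"
      unfolding W2 using r by algebra
    have "v$2 * ((v$1 * P1 + v$2 * P2) / W) / W = (v$2 * (v$1 * P1 + v$2 * P2)) / W^2"
      by (simp add: power2_eq_square)
    also have "\<dots> = P2" using eq Wp by simp
    finally show ?thesis .
  qed
  then show "px 2 (\<lambda>v. ff (x, v)) v = v$2 * deriv (\<lambda>s. FF x s (v$3)) (wperp v) / wperp v"
    by (simp add: e P2_def W_def)
qed

end

definition Aco :: "(real \<Rightarrow> real^3 \<Rightarrow> real \<Rightarrow> real \<Rightarrow> real) \<Rightarrow> (real \<Rightarrow> real^3 \<Rightarrow> real) \<Rightarrow> 3 \<Rightarrow> real \<Rightarrow> real^3 \<Rightarrow> real \<Rightarrow> real \<Rightarrow> real" where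
  "Aco F phiF i t x w u = px i (\<lambda>y. F t y w u) x - px i (phiF t) x * deriv (\<lambda>s. F t x s u) w / w"

definition Dco :: "(real \<Rightarrow> real^3 \<Rightarrow> real \<Rightarrow> real \<Rightarrow> real) \<Rightarrow> (real \<Rightarrow> real^3 \<Rightarrow> real) \<Rightarrow> real \<Rightarrow> real^3 \<Rightarrow> real \<Rightarrow> real \<Rightarrow> real" where
  "Dco F phiF t x w u = u * px 3 (\<lambda>y. F t y w u) x - px 3 (phiF t) x * deriv (\<lambda>s. F t x w s) u"

definition RHS :: "(real \<Rightarrow> real^3 \<Rightarrow> real \<Rightarrow> real \<Rightarrow> real) \<Rightarrow> (real \<Rightarrow> real^3 \<Rightarrow> real) \<Rightarrow> real \<Rightarrow> real^3 \<Rightarrow> real^3 \<Rightarrow> real" where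
  "RHS F phiF t x v = v \<bullet> grad3 (\<lambda>y. f0_of F t y v) x + (- grad3 (phiF t) x) \<bullet> grad3 (f0_of F t x) v"

definition f1p :: "(real \<Rightarrow> real^2 \<Rightarrow> real) \<Rightarrow> (real \<Rightarrow> real^3 \<Rightarrow> real \<Rightarrow> real \<Rightarrow> real) \<Rightarrow> (real \<Rightarrow> real^3 \<Rightarrow> real) \<Rightarrow> real \<Rightarrow> real^3 \<Rightarrow> real^3 \<Rightarrow> real" where
  "f1p b F phiF t x v = - (1 / b t (xperp x)) *
     (- (v$2) * px 1 (\<lambda>y. f0_of F t y v) x + v$1 * px 2 (\<lambda>y. f0_of F t y v) x
      + px 1 (phiF t) x * px 2 (f0_of F t x) v - px 2 (phiF t) x * px 1 (f0_of F t x) v)"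

lemma loc:
  assumes "smooth (\<lambda>(x, v). f0_of F t x v)"
  shows "f0loc (\<lambda>(x, v). f0_of F t x v) (F t)"
  using assms by unfold_locales (auto simp: f0_of_def)

lemma RHS_pos:
  assumes sm: "smooth (\<lambda>(x, v). f0_of F t x v)" and w: "wperp v > 0"
  shows "RHS F phiF t x v = v$1 * Aco F phiF 1 t x (wperp v) (v$3) + v$2 * Aco F phiF 2 t x (wperp v) (v$3)
          + Dco F phiF t x (wperp v) (v$3)"
proof -
  interpret f0loc "\<lambda>(x, v). f0_of F t x v" "F t" by (rule loc[OF sm])
  have fx: "px i (\<lambda>y. f0_of F t y v) x = px i (\<lambda>y. F t y (wperp v) (v$3)) x" for i
    using Fx[of i v x] by simp
  have v1: "px 1 (f0_of F t x) v = v$1 * deriv (\<lambda>s. F t x s (v$3)) (wperp v) / wperp v"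
    using VW(1)[OF w, of x] by (simp add: eta_contract_eq)
  have v2: "px 2 (f0_of F t x) v = v$2 * deriv (\<lambda>s. F t x s (v$3)) (wperp v) / wperp v"
    using VW(2)[OF w, of x] by simp
  have v3: "px 3 (f0_of F t x) v = deriv (\<lambda>s. F t x (wperp v) s) (v$3)"
    using Fu[of x v] by simp
  show ?thesis
    unfolding RHS_def Aco_def Dco_def
    by (simp add: inner_vec_def sum_3 grad3_def fx v1 v2 v3 algebra_simps)
qed

lemma RHS_axis:
  assumes sm: "smooth (\<lambda>(x, v). f0_of F t x v)" and w: "wperp v = 0"
  shows "RHS F phiF t x v = Dco F phiF t x 0 (v$3)"
proof -
  interpret f0loc "\<lambda>(x, v). f0_of F t x v" "F t" by (rule loc[OF sm])
  have z: "v$1 = 0" "v$2 = 0" using w by (auto simp: wperp_zero)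
  have fx: "px i (\<lambda>y. f0_of F t y v) x = px i (\<lambda>y. F t y (wperp v) (v$3)) x" for i
    using Fx[of i v x] by simp
  have v1: "px 1 (f0_of F t x) v = 0" using even_axis[OF z, of 1 x] by simp
  have v2: "px 2 (f0_of F t x) v = 0" using even_axis[OF z, of 2 x] by simp
  have v3: "px 3 (f0_of F t x) v = deriv (\<lambda>s. F t x (wperp v) s) (v$3)"
    using Fu[of x v] by simp
  show ?thesis
    unfolding RHS_def Dco_def
    by (simp add: inner_vec_def sum_3 grad3_def fx v1 v2 v3 z w)
qed

lemma f1p_pos:
  assumes sm: "smooth (\<lambda>(x, v). f0_of F t x v)" and w: "wperp v > 0"
  shows "f1p b F phiF t x v = - (1 / b t (xperp x)) *
     (v$1 * Aco F phiF 2 t x (wperp v) (v$3) - v$2 * Aco F phiF 1 t x (wperp v) (v$3))"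
proof -
  interpret f0loc "\<lambda>(x, v). f0_of F t x v" "F t" by (rule loc[OF sm])
  have fx: "px i (\<lambda>y. f0_of F t y v) x = px i (\<lambda>y. F t y (wperp v) (v$3)) x" for i
    using Fx[of i v x] by simp
  have v1: "px 1 (f0_of F t x) v = v$1 * deriv (\<lambda>s. F t x s (v$3)) (wperp v) / wperp v"
    using VW(1)[OF w, of x] by simp
  have v2: "px 2 (f0_of F t x) v = v$2 * deriv (\<lambda>s. F t x s (v$3)) (wperp v) / wperp v"
    using VW(2)[OF w, of x] by simp
  show ?thesis
    unfolding f1p_def Aco_def
    by (simp add: fx v1 v2 algebra_simps)
qed

lemma f1p_diff:
  assumes sm: "smooth (\<lambda>(x, v). f0_of F t x v)"
  shows "f1p b F phiF t x differentiable (at v)"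
proof -
  let ?ff = "\<lambda>(x, v). f0_of F t x v"
  have dx: "(\<lambda>v. px i (\<lambda>y. f0_of F t y v) x) differentiable (at v)" for i
  proof -
    have "(\<lambda>v. px i (\<lambda>y. f0_of F t y v) x) = (\<lambda>v. pdir (axis i 1, 0) ?ff (x, v))"
      using px_slice_x[of i ?ff] by simp
    moreover have "(\<lambda>v. pdir (axis i 1, 0) ?ff (x, v)) differentiable (at v)"
      by (rule diff_slice_v[OF smooth_diff[OF smooth_pdir[OF sm Basis_x]]])
    ultimately show ?thesis by simp
  qed
  have dv: "(\<lambda>v. px i (f0_of F t x) v) differentiable (at v)" for i
  proof -
    have "(\<lambda>v. px i (f0_of F t x) v) = (\<lambda>v. pdir (0, axis i 1) ?ff (x, v))"
      using px_slice_v[of i ?ff] by (simp add: eta_contract_eq)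
    moreover have "(\<lambda>v. pdir (0, axis i 1) ?ff (x, v)) differentiable (at v)"
      by (rule diff_slice_v[OF smooth_diff[OF smooth_pdir[OF sm Basis_v]]])
    ultimately show ?thesis by simp
  qed
  have c: "(\<lambda>v::real^3. v$i) differentiable (at v)" for i
    by (rule bounded_linear_imp_differentiable[OF bounded_linear_vec_nth])
  show ?thesis unfolding f1p_def
    by (intro differentiable_mult differentiable_add differentiable_diff differentiable_minus differentiable_const dx dv c)
qed

lemma vperp_axis: "v$1 = 0 \<Longrightarrow> v$2 = 0 \<Longrightarrow> vperp v = 0"
  by (simp add: vperp_def vec_eq_iff forall_3)

lemma Lop_deriv:
  assumes b: "b t (xperp x) \<noteq> 0" and d: "f t x differentiable (at (rot s v))"
  shows "((\<lambda>s. f t x (rot s v)) has_real_derivative (Lop b f t x (rot s v) / b t (xperp x))) (at s)"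
proof -
  have "Lop b f t x (rot s v) / b t (xperp x) = - (vperp (rot s v) \<bullet> grad3 (f t x) (rot s v))"
    using b by (simp add: Lop_def)
  then show ?thesis using circ_deriv[OF d] by simp
qed

lemma necessity:
  assumes bpos: "b t (xperp x) > 0" and sm: "smooth (\<lambda>(x, v). f0_of F t x v)"
    and f1d: "\<And>v. f1 t x differentiable (at v)"
    and L: "\<And>v. Lop b f1 t x v = RHS F phiF t x v"
    and w: "w \<ge> 0"
  shows "Dco F phiF t x w u = 0"
proof (cases "w = 0")
  case True
  define v0 :: "real^3" where "v0 = vector [0, 0, u]"
  have z: "v0$1 = 0" "v0$2 = 0" "v0$3 = u" by (auto simp: v0_def)
  have "Lop b f1 t x v0 = 0" by (simp add: Lop_def vperp_axis[OF z(1,2)])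
  moreover have "RHS F phiF t x v0 = Dco F phiF t x 0 u"
    using RHS_axis[OF sm, of v0] z by (simp add: wperp_zero)
  ultimately show ?thesis using L[of v0] True by simp
next
  case False
  then have wp: "w > 0" using w by simp
  define v0 :: "real^3" where "v0 = vector [w, 0, u]"
  have wv0: "wperp v0 = w" using w by (simp add: v0_def wperp_def)
  have v03: "v0$3 = u" by (simp add: v0_def)
  define bb where "bb = b t (xperp x)"
  define A1 where "A1 = Aco F phiF 1 t x w u"
  define A2 where "A2 = Aco F phiF 2 t x w u"
  define D where "D = Dco F phiF t x w u"
  define a' :: "real^3" where "a' = vector [-A2, A1, 0]"
  have bb: "bb > 0" using bpos by (simp add: bb_def)
  have dg: "((\<lambda>s. f1 t x (rot s v0)) has_real_derivative ((rot s v0)$1 * A1 + (rot s v0)$2 * A2 + D) / bb) (at s)" for s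
  proof -
    have "RHS F phiF t x (rot s v0) = (rot s v0)$1 * A1 + (rot s v0)$2 * A2 + D"
      using RHS_pos[OF sm, of "rot s v0" phiF x] wp by (simp add: rot_wperp wv0 v03 A1_def A2_def D_def)
    then show ?thesis using Lop_deriv[of b t x f1 s v0] bb f1d L by (simp add: bb_def)
  qed
  have da: "((\<lambda>s. a' \<bullet> rot s v0) has_real_derivative ((rot s v0)$1 * A1 + (rot s v0)$2 * A2)) (at s)" for s
    using DERIV_rot_inner[of a' v0 s] by (simp add: a'_def inner_vec_def sum_3 vperp_def algebra_simps)
  define H where "H = (\<lambda>s. f1 t x (rot s v0) - (a' \<bullet> rot s v0 + D * s) / bb)"
  have dH: "DERIV H s :> 0" for s
  proof -
    have q1: "DERIV (\<lambda>z. a' \<bullet> rot z v0 + D * z) s :> ((rot s v0)$1 * A1 + (rot s v0)$2 * A2 + D * 1)"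
      by (intro DERIV_add da DERIV_cmult DERIV_ident)
    have q2: "DERIV (\<lambda>z. (a' \<bullet> rot z v0 + D * z) / bb) s :> ((rot s v0)$1 * A1 + (rot s v0)$2 * A2 + D * 1) / bb"
      by (rule DERIV_cdivide[OF q1])
    have "DERIV H s :> ((rot s v0)$1 * A1 + (rot s v0)$2 * A2 + D) / bb - ((rot s v0)$1 * A1 + (rot s v0)$2 * A2 + D * 1) / bb"
      unfolding H_def by (rule DERIV_diff[OF dg q2])
    then show ?thesis by simp
  qed
  have "H (2*pi) = H 0" using DERIV_isconst_all[of H] dH by blast
  then have "f1 t x v0 - (a' \<bullet> v0 + D * (2*pi)) / bb = f1 t x v0 - (a' \<bullet> v0 + D * 0) / bb"
    by (simp add: H_def rot_2pi)
  then have "D * (2*pi) = 0" using bb by (simp add: field_simps)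
  then show ?thesis by (simp add: D_def)
qed

lemma sufficiency:
  assumes bpos: "b t (xperp x) > 0" and sm: "smooth (\<lambda>(x, v). f0_of F t x v)"
    and dr: "\<And>w u. w \<ge> 0 \<Longrightarrow> Dco F phiF t x w u = 0"
  shows "Lop b (f1p b F phiF) t x v = RHS F phiF t x v"
proof (cases "wperp v = 0")
  case True
  then have z: "v$1 = 0" "v$2 = 0" by (auto simp: wperp_zero)
  have "Lop b (f1p b F phiF) t x v = 0" by (simp add: Lop_def vperp_axis[OF z])
  moreover have "RHS F phiF t x v = 0" using RHS_axis[OF sm True] dr[of 0] by simp
  ultimately show ?thesis by simp
next
  case False
  then have wp: "wperp v > 0" using wperp_nonneg[of v] by simp
  define bb where "bb = b t (xperp x)"
  define A1 where "A1 = Aco F phiF 1 t x (wperp v) (v$3)"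
  define A2 where "A2 = Aco F phiF 2 t x (wperp v) (v$3)"
  define c :: "real^3" where "c = (- (1 / bb)) *\<^sub>R vector [A2, -A1, 0]"
  have bb: "bb > 0" using bpos by (simp add: bb_def)
  have fe: "(\<lambda>s. f1p b F phiF t x (rot s v)) = (\<lambda>s. c \<bullet> rot s v)"
  proof
    fix s
    show "f1p b F phiF t x (rot s v) = c \<bullet> rot s v"
      using f1p_pos[OF sm, of "rot s v" b phiF x] wp
      by (simp add: rot_wperp A1_def A2_def c_def bb_def inner_vec_def sum_3 algebra_simps)
  qed
  have d1: "((\<lambda>s. f1p b F phiF t x (rot s v)) has_real_derivative (Lop b (f1p b F phiF) t x v / bb)) (at 0)"
    using Lop_deriv[of b t x "f1p b F phiF" 0 v] bb f1p_diff[OF sm] by (simp add: bb_def)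
  have d2: "((\<lambda>s. f1p b F phiF t x (rot s v)) has_real_derivative (c \<bullet> (- vperp v))) (at 0)"
    unfolding fe using DERIV_rot_inner[of c v 0] by simp
  have "Lop b (f1p b F phiF) t x v / bb = c \<bullet> (- vperp v)" using DERIV_unique[OF d1 d2] .
  then have "Lop b (f1p b F phiF) t x v = v$1 * A1 + v$2 * A2"
    using bb by (simp add: c_def inner_vec_def sum_3 vperp_def field_simps)
  moreover have "RHS F phiF t x v = v$1 * A1 + v$2 * A2"
    using RHS_pos[OF sm wp, of phiF x] dr[of "wperp v" "v$3"] wperp_nonneg[of v] by (simp add: A1_def A2_def)
  ultimately show ?thesis by simp
qed

lemma polar_rep:
  assumes w: "wperp v > 0"
  shows "\<exists>\<theta>. v = rot \<theta> (vector [wperp v, 0, v$3])"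
proof -
  define r where "r = wperp v"
  have rp: "r > 0" using w by (simp add: r_def)
  have r2: "r^2 = (v$1)^2 + (v$2)^2" by (simp add: r_def wperp_sq)
  have "(v$1/r)^2 + (v$2/r)^2 = ((v$1)^2 + (v$2)^2) / r^2"
    by (simp add: power_divide add_divide_distrib)
  also have "\<dots> = 1" using rp by (simp add: r2[symmetric])
  finally have "(v$1/r)^2 + (v$2/r)^2 = 1" .
  then obtain t where t: "v$1/r = cos t" "v$2/r = sin t"
    using sincos_total_2pi by metis
  have "v = rot t (vector [r, 0, v$3])"
    using t rp by (auto simp: rot_def vec_eq_iff forall_3 field_simps)
  then show ?thesis unfolding r_def by blast
qed

lemma gyro_eval:
  assumes w: "w > 0" and bb: "bb \<noteq> 0"
    and fe: "\<And>\<theta>. g (vector [w * cos \<theta>, w * sin \<theta>, u]) = - (1 / bb) * (w * cos \<theta> * A2 - w * sin \<theta> * A1) + P"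
  shows "gyro g w u = P"
proof -
  define \<Phi> where "\<Phi> = (\<lambda>\<theta>. - (1 / bb) * (w * sin \<theta> * A2 + w * cos \<theta> * A1) + P * \<theta>)"
  have d: "(\<Phi> has_real_derivative (- (1 / bb) * (w * cos \<theta> * A2 - w * sin \<theta> * A1) + P)) (at \<theta>)" for \<theta>
    unfolding \<Phi>_def by (rule derivative_eq_intros refl)+ (simp add: algebra_simps)
  have "((\<lambda>\<theta>. - (1 / bb) * (w * cos \<theta> * A2 - w * sin \<theta> * A1) + P) has_integral (\<Phi> (2*pi) - \<Phi> 0)) {0..2*pi}"
    by (rule fundamental_theorem_of_calculus, simp, rule has_vector_derivative_at_within,
        rule d[unfolded has_real_derivative_iff_has_vector_derivative])
  moreover have "\<Phi> (2*pi) - \<Phi> 0 = 2 * pi * P" by (simp add: \<Phi>_def)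
  ultimately have "integral {0..2*pi} (\<lambda>\<theta>. g (vector [w * cos \<theta>, w * sin \<theta>, u])) = 2 * pi * P"
    by (simp add: fe integral_unique)
  then show ?thesis by (simp add: gyro_def)
qed

lemma eG:
  assumes w: "wperp v > 0"
  shows "e_theta v \<bullet> Gvec F phiF t x (wperp v) u = v$1 * Aco F phiF 2 t x (wperp v) u - v$2 * Aco F phiF 1 t x (wperp v) u"
  using w by (simp add: e_theta_def Gvec_def Aco_def inner_vec_def sum_2 field_simps)

theorem proposition4p3:
  fixes \<alpha> :: real
    and b :: "real \<Rightarrow> real^2 \<Rightarrow> real"
    and F :: "real \<Rightarrow> real^3 \<Rightarrow> real \<Rightarrow> real \<Rightarrow> real"
    and phiF :: "real \<Rightarrow> real^3 \<Rightarrow> real"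
  assumes alpha_pos: "\<alpha> > 0"
    and b_lower: "\<forall>t\<ge>0. \<forall>y. b t y > \<alpha>"
    and b_bounded: "\<exists>M. \<forall>t\<ge>0. \<forall>y. \<bar>b t y\<bar> \<le> M"
    and b_lipschitz: "\<exists>K. \<forall>t\<ge>0. \<forall>s\<ge>0. \<forall>y z. \<bar>b t y - b s z\<bar> \<le> K * dist (t, y) (s, z)"
    and f0_smooth: "\<forall>t\<ge>0. smooth (\<lambda>(x, v). f0_of F t x v)"
    and phiF_smooth: "\<forall>t\<ge>0. smooth (phiF t)"
    and phiF_poisson: "poisson_red phiF F"
  shows "((\<exists>f1. solves_L1 b F phiF f1) \<longleftrightarrow> drift_cond F phiF) \<and>
         (drift_cond F phiF \<longrightarrow>
         (\<forall>f1 phi1 E1. solves_L1 b F phiF f1 \<and> poisson_full phi1 f1 \<and>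
            (\<forall>t\<ge>0. \<forall>x. E1 t x = - grad3 (phi1 t) x) \<longrightarrow>
          (\<exists>P phiP.
             (\<forall>t\<ge>0. \<forall>x v. wperp v \<noteq> 0 \<longrightarrow>
                f1 t x v = - (1 / b t (xperp x)) * (e_theta v \<bullet> Gvec F phiF t x (wperp v) (v$3))
                           + P t x (wperp v) (v$3)) \<and>
             (\<forall>t\<ge>0. \<forall>x v. wperp v = 0 \<longrightarrow> f1 t x v = P t x 0 (v$3)) \<and>
             poisson_red phiP P \<and>
             (\<forall>t\<ge>0. \<forall>x. E1 t x = - grad3 (phiP t) x) \<and>
             (\<forall>x w u. w \<ge> 0 \<longrightarrow> P 0 x w u = gyro (f1 0 x) w u))))"
proof -
  have bpos: "\<And>t y. t \<ge> 0 \<Longrightarrow> b t y > 0" using alpha_pos b_lower by (meson less_trans)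
  have sm: "\<And>t. t \<ge> 0 \<Longrightarrow> smooth (\<lambda>(x, v). f0_of F t x v)" using f0_smooth by blast
  have drift_eq: "drift_cond F phiF \<longleftrightarrow> (\<forall>t\<ge>0. \<forall>x w u. w \<ge> 0 \<longrightarrow> Dco F phiF t x w u = 0)"
    by (simp add: drift_cond_def Dco_def)
  have solves_eq: "solves_L1 b F phiF f1 \<longleftrightarrow>
      (\<forall>t\<ge>0. \<forall>x v. f1 t x differentiable (at v) \<and> Lop b f1 t x v = RHS F phiF t x v)" for f1
    by (simp add: solves_L1_def RHS_def)
  have nec: "drift_cond F phiF" if "solves_L1 b F phiF f1" for f1
    unfolding drift_eq
  proof (intro allI impI)
    fix t x w u assume t: "t \<ge> (0::real)" and w: "w \<ge> (0::real)"
    show "Dco F phiF t x w u = 0"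
    proof -
      have d: "\<And>v. f1 t x differentiable (at v)" and L: "\<And>v. Lop b f1 t x v = RHS F phiF t x v"
        using that t by (auto simp: solves_eq)
      show ?thesis by (rule necessity[OF bpos[OF t, of "xperp x"] sm[OF t] d L w])
    qed
  qed
  have suf: "solves_L1 b F phiF (f1p b F phiF)" if dc: "drift_cond F phiF"
    unfolding solves_eq
  proof (intro allI impI conjI)
    fix t x v assume t: "t \<ge> (0::real)"
    show "f1p b F phiF t x differentiable (at v)" by (rule f1p_diff[OF sm[OF t]])
    show "Lop b (f1p b F phiF) t x v = RHS F phiF t x v"
    proof (rule sufficiency[of b t x F phiF v, OF bpos[OF t, of "xperp x"] sm[OF t]])
      fix w u :: real assume "w \<ge> 0"
      then show "Dco F phiF t x w u = 0" using dc t by (auto simp: drift_eq)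
    qed
  qed
  have part1: "(\<exists>f1. solves_L1 b F phiF f1) \<longleftrightarrow> drift_cond F phiF"
    using nec suf by blast
  show ?thesis
  proof (intro conjI part1 impI allI)
    fix f1 phi1 E1
    assume dc: "drift_cond F phiF"
      and H: "solves_L1 b F phiF f1 \<and> poisson_full phi1 f1 \<and> (\<forall>t\<ge>0. \<forall>x. E1 t x = - grad3 (phi1 t) x)"
    have S1: "\<And>t x v. t \<ge> 0 \<Longrightarrow> f1 t x differentiable (at v)"
      and S2: "\<And>t x v. t \<ge> 0 \<Longrightarrow> Lop b f1 t x v = RHS F phiF t x v"
      using H by (auto simp: solves_eq)
    have S2p: "\<And>t x v. t \<ge> 0 \<Longrightarrow> Lop b (f1p b F phiF) t x v = RHS F phiF t x v"
      using suf[OF dc] by (auto simp: solves_eq)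
    define P where "P = (\<lambda>t x w u. if w = 0 then f1 t x (vector [0, 0, u])
                         else f1 t x (vector [w, 0, u]) - f1p b F phiF t x (vector [w, 0, u]))"
    have key: "f1 t x (rot s v) - f1p b F phiF t x (rot s v) = f1 t x v - f1p b F phiF t x v"
      if t: "t \<ge> 0" for t x s v
    proof -
      define K where "K = (\<lambda>s. f1 t x (rot s v) - f1p b F phiF t x (rot s v))"
      have bb: "b t (xperp x) \<noteq> 0" using bpos[OF t, of "xperp x"] by simp
      have "DERIV K s :> Lop b f1 t x (rot s v) / b t (xperp x) - Lop b (f1p b F phiF) t x (rot s v) / b t (xperp x)" for s
        unfolding K_def
        by (intro DERIV_diff Lop_deriv bb S1[OF t] f1p_diff[OF sm[OF t]])
      then have "DERIV K s :> 0" for s using S2[OF t] S2p[OF t] by simp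
      then have "K s = K 0" using DERIV_isconst_all by blast
      then show ?thesis by (simp add: K_def)
    qed
    have fP: "f1 t x y = f1p b F phiF t x y + P t x (wperp y) (y$3)"
      if t: "t \<ge> 0" and w: "wperp y > 0" for t x y
    proof -
      obtain \<theta> where th: "y = rot \<theta> (vector [wperp y, 0, y$3])" using polar_rep[OF w] by blast
      have "f1 t x y - f1p b F phiF t x y = f1 t x (vector [wperp y, 0, y$3]) - f1p b F phiF t x (vector [wperp y, 0, y$3])"
        using key[OF t, of x \<theta> "vector [wperp y, 0, y$3]"] th by simp
      then show ?thesis using w by (simp add: P_def)
    qed
    have gP: "P t x w u = gyro (f1 t x) w u" if t: "t \<ge> 0" and w: "w \<ge> 0" for t x w u
    proof (cases "w = 0")
      case True
      then show ?thesis by (simp add: P_def gyro_def)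
    next
      case False
      then have wp: "w > 0" using w by simp
      show ?thesis
      proof (rule gyro_eval[OF wp, symmetric])
        show "b t (xperp x) \<noteq> 0" using bpos[OF t, of "xperp x"] by simp
        fix \<theta>
        define y :: "real^3" where "y = vector [w * cos \<theta>, w * sin \<theta>, u]"
        have wy: "wperp y = w" using wp
          by (simp add: y_def wperp_def power_mult_distrib flip: distrib_left)
        have y3: "y$3 = u" by (simp add: y_def)
        show "f1 t x (vector [w * cos \<theta>, w * sin \<theta>, u]) =
          - (1 / b t (xperp x)) * (w * cos \<theta> * Aco F phiF 2 t x w u - w * sin \<theta> * Aco F phiF 1 t x w u) + P t x w u"
          using fP[OF t, of y x] f1p_pos[OF sm[OF t], of y b phiF x] wy y3 wp
          by (simp add: y_def[symmetric]) (simp add: y_def)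
      qed
    qed
    show "\<exists>P phiP.
             (\<forall>t\<ge>0. \<forall>x v. wperp v \<noteq> 0 \<longrightarrow>
                f1 t x v = - (1 / b t (xperp x)) * (e_theta v \<bullet> Gvec F phiF t x (wperp v) (v$3))
                           + P t x (wperp v) (v$3)) \<and>
             (\<forall>t\<ge>0. \<forall>x v. wperp v = 0 \<longrightarrow> f1 t x v = P t x 0 (v$3)) \<and>
             poisson_red phiP P \<and>
             (\<forall>t\<ge>0. \<forall>x. E1 t x = - grad3 (phiP t) x) \<and>
             (\<forall>x w u. w \<ge> 0 \<longrightarrow> P 0 x w u = gyro (f1 0 x) w u)"
    proof (intro exI[of _ P] exI[of _ phi1] conjI allI impI)
      fix t x v assume t: "t \<ge> (0::real)" and w: "wperp v \<noteq> 0"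
      then have wp: "wperp v > 0" using wperp_nonneg[of v] by simp
      show "f1 t x v = - (1 / b t (xperp x)) * (e_theta v \<bullet> Gvec F phiF t x (wperp v) (v$3)) + P t x (wperp v) (v$3)"
        using fP[OF t wp, of x] f1p_pos[OF sm[OF t] wp, of b phiF x] eG[OF wp] by simp
    next
      fix t x v assume t: "t \<ge> (0::real)" and w: "wperp v = 0"
      then have "v = vector [0, 0, v$3]" by (auto simp: wperp_zero vec_eq_iff forall_3)
      then show "f1 t x v = P t x 0 (v$3)" by (simp add: P_def)
    next
      show "poisson_red phi1 P"
        unfolding poisson_red_def
      proof (intro allI impI)
        fix t x assume t: "t \<ge> (0::real)"
        have c: "continuous_on UNIV (f1 t x)"
          by (rule differentiable_imp_continuous_on) (use S1[OF t] in \<open>auto simp: differentiable_on_def intro: differentiable_at_withinI\<close>)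
        have hb: "has_bochner_integral lborel (f1 t x) (- lap (phi1 t) x)"
          using H t by (simp add: poisson_full_def)
        have "has_bochner_integral lborel
           (\<lambda>p::real\<times>real. indicator ({0..}\<times>UNIV) p * (2*pi * gyro (f1 t x) (fst p) (snd p) * fst p)) (- lap (phi1 t) x)"
          by (rule polar[OF c hb])
        moreover have "indicator ({0..}\<times>UNIV) p * (2*pi * gyro (f1 t x) (fst p) (snd p) * fst p) =
            indicator ({0..}\<times>UNIV) p * (2 * pi * P t x (fst p) (snd p) * fst p)" for p :: "real \<times> real"
          using gP[OF t, of "fst p" x "snd p"] by (cases "fst p \<ge> 0") (auto simp: indicator_def)
        ultimately show "has_bochner_integral lborel
           (\<lambda>p. indicator ({0..}\<times>UNIV) p * (2 * pi * P t x (fst p) (snd p) * fst p)) (- lap (phi1 t) x)"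
          by simp
      qed
    next
      fix t x assume "t \<ge> (0::real)"
      then show "E1 t x = - grad3 (phi1 t) x" using H by simp
    next
      fix x w u assume "w \<ge> (0::real)"
      then show "P 0 x w u = gyro (f1 0 x) w u" using gP by simp
    qed
  qed
qed

end
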